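(* Let $R$ be the right shift on $\ell^2_{\mathbb{H}}(\mathbb{Z})$ defined by $R(x)=y$ with $y_i=x_{i+1}$ for $i\neq-1$ and $y_{-1}=0$. Then $\sigma_{S,\pi}^{\Phi^0}(R)$ is properly contained in $\sigma_S(R)$.
   Context: $\mathbb{H}$ denotes the quaternions, $Re(q)$ the real part and $|q|$ the norm. $\ell^2_{\mathbb{H}}(\mathbb{Z})=\{x:\mathbb{Z}\to\mathbb{H}:\sum_i|x_i|^2<\infty\}$ is a right quaternionic Hilbert space with $xa=(x_ia)_i$ and $\langle x,y\rangle=\sum_i\overline{x_i}y_i$, equipped with the left multiplication induced by the standard Hilbert basis $\{e_n\}$, i.e. $qx=(qx_i)_i$. $\mathcal{B}=\mathcal{B}(\ell^2_{\mathbb{H}}(\mathbb{Z}))$ (bounded right linear operators with $(qT)x=q(Tx)$, $(Tq)x=T(qx)$, composition, operator norm) is a quaternionic two-sided Banach algebra with unit $\mathbb{I}$; $\mathcal{K}$ is its ideal of compact operators and $\pi:\mathcal{B}\to\mathcal{B}/\mathcal{K}$ the quotient map. For $T\in\mathcal{B}$, $R_q(T)=T^2-2Re(q)T+|q|^2\mathbb{I}$, $\sigma_S(T)=\{q\in\mathbb{H}:R_q(T)\notin\mathcal{B}^{-1}\}$, $\Phi_\pi^0=\mathcal{B}^{-1}+\mathcal{K}$, and $\sigma_{S,\pi}^{\Phi^0}(T)=\{q\in\mathbb{H}:R_q(T)\notin\Phi_\pi^0\}$. *)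

theory Defs
  imports "HOL-Analysis.Analysis"
begin

datatype quat = Quat (qre: real) (qi: real) (qj: real) (qk: real)

definition qzero :: quat where "qzero = Quat 0 0 0 0"

definition qadd :: "quat \<Rightarrow> quat \<Rightarrow> quat" where
  "qadd p q = Quat (qre p + qre q) (qi p + qi q) (qj p + qj q) (qk p + qk q)"

definition qneg :: "quat \<Rightarrow> quat" where
  "qneg p = Quat (- qre p) (- qi p) (- qj p) (- qk p)"

definition qsub :: "quat \<Rightarrow> quat \<Rightarrow> quat" where
  "qsub p q = qadd p (qneg q)"

definition qmul :: "quat \<Rightarrow> quat \<Rightarrow> quat" where
  "qmul p q = Quat
     (qre p * qre q - qi p * qi q - qj p * qj q - qk p * qk q)
     (qre p * qi q + qi p * qre q + qj p * qk q - qk p * qj q)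
     (qre p * qj q - qi p * qk q + qj p * qre q + qk p * qi q)
     (qre p * qk q + qi p * qj q - qj p * qi q + qk p * qre q)"

definition qscale :: "real \<Rightarrow> quat \<Rightarrow> quat" where
  "qscale r p = Quat (r * qre p) (r * qi p) (r * qj p) (r * qk p)"

definition qnorm2 :: "quat \<Rightarrow> real" where
  "qnorm2 p = (qre p)\<^sup>2 + (qi p)\<^sup>2 + (qj p)\<^sup>2 + (qk p)\<^sup>2"

definition qnorm :: "quat \<Rightarrow> real" where
  "qnorm p = sqrt (qnorm2 p)"

type_synonym qseq = "int \<Rightarrow> quat"

definition l2H :: "qseq set" where
  "l2H = {x. (\<lambda>i. qnorm2 (x i)) summable_on UNIV}"

definition l2norm :: "qseq \<Rightarrow> real" where
  "l2norm x = sqrt (\<Sum>\<^sub>\<infinity>i. qnorm2 (x i))"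

definition sadd :: "qseq \<Rightarrow> qseq \<Rightarrow> qseq" where
  "sadd x y = (\<lambda>i. qadd (x i) (y i))"

definition ssub :: "qseq \<Rightarrow> qseq \<Rightarrow> qseq" where
  "ssub x y = (\<lambda>i. qsub (x i) (y i))"

definition srmul :: "qseq \<Rightarrow> quat \<Rightarrow> qseq" where
  "srmul x a = (\<lambda>i. qmul (x i) a)"

definition sscale :: "real \<Rightarrow> qseq \<Rightarrow> qseq" where
  "sscale r x = (\<lambda>i. qscale r (x i))"

text \<open>Operators are functions on sequences; only their behaviour on \<open>l2H\<close> matters.\<close>
type_synonym qop = "qseq \<Rightarrow> qseq"

definition bounded_op :: "qop \<Rightarrow> bool" where
  "bounded_op T \<longleftrightarrow>
     (\<forall>x\<in>l2H. T x \<in> l2H) \<and>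
     (\<forall>x\<in>l2H. \<forall>y\<in>l2H. T (sadd x y) = sadd (T x) (T y)) \<and>
     (\<forall>x\<in>l2H. \<forall>a. T (srmul x a) = srmul (T x) a) \<and>
     (\<exists>C. \<forall>x\<in>l2H. l2norm (T x) \<le> C * l2norm x)"

definition idop :: qop where "idop = (\<lambda>x. x)"

definition invertible_op :: "qop \<Rightarrow> bool" where
  "invertible_op T \<longleftrightarrow> bounded_op T \<and>
     (\<exists>S. bounded_op S \<and> (\<forall>x\<in>l2H. S (T x) = x \<and> T (S x) = x))"

definition compact_op :: "qop \<Rightarrow> bool" where
  "compact_op K \<longleftrightarrow> bounded_op K \<and>
     (\<forall>xs :: nat \<Rightarrow> qseq. (\<forall>n. xs n \<in> l2H) \<and> (\<exists>B. \<forall>n. l2norm (xs n) \<le> B) \<longrightarrow>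
        (\<exists>r y. strict_mono r \<and> y \<in> l2H \<and>
           (\<lambda>n. l2norm (ssub (K (xs (r n))) y)) \<longlonglongrightarrow> 0))"

text \<open>\<open>\<Phi>\<^sup>0_\<pi> = \<B>\<^sup>-\<^sup>1 + \<K>\<close> (operators identified when they agree on \<open>l2H\<close>).\<close>
definition Phi0 :: "qop \<Rightarrow> bool" where
  "Phi0 T \<longleftrightarrow> (\<exists>S K. invertible_op S \<and> compact_op K \<and>
                  (\<forall>x\<in>l2H. T x = sadd (S x) (K x)))"

definition Rq :: "quat \<Rightarrow> qop \<Rightarrow> qop" where
  "Rq q T = (\<lambda>x. sadd (ssub (T (T x)) (sscale (2 * qre q) (T x)))
                        (sscale ((qnorm q)\<^sup>2) (idop x)))"

definition S_spectrum :: "qop \<Rightarrow> quat set" where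
  "S_spectrum T = {q. \<not> invertible_op (Rq q T)}"

definition S_Phi0_spectrum :: "qop \<Rightarrow> quat set" where
  "S_Phi0_spectrum T = {q. \<not> Phi0 (Rq q T)}"

definition Rshift :: qop where
  "Rshift x = (\<lambda>i. if i = -1 then qzero else x (i + 1))"

end

theory Submission
  imports Defs
begin

lemma quat_eqI: "qre p = qre q \<Longrightarrow> qi p = qi q \<Longrightarrow> qj p = qj q \<Longrightarrow> qk p = qk q \<Longrightarrow> p = q"
  using quat.expand by blast

lemma qnorm2_nonneg: "0 \<le> qnorm2 p"
  by (simp add: qnorm2_def)

lemma qnorm2_zero[simp]: "qnorm2 qzero = 0"
  by (simp add: qnorm2_def qzero_def)

lemma qnorm2_neg[simp]: "qnorm2 (qneg p) = qnorm2 p"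
  by (simp add: qnorm2_def qneg_def)

lemma qadd_zero[simp]: "qadd p qzero = p"
  by (rule quat_eqI) (simp_all add: qadd_def qzero_def)

lemma qsub_zero[simp]: "qsub qzero qzero = qzero"
  by (rule quat_eqI) (simp_all add: qsub_def qadd_def qneg_def qzero_def)

lemma qmul_zero[simp]: "qmul qzero a = qzero"
  by (rule quat_eqI) (simp_all add: qmul_def qzero_def)

definition zs :: qseq where "zs = (\<lambda>i. qzero)"

lemma l2H_finite:
  assumes "finite {i. x i \<noteq> qzero}"
  shows "x \<in> l2H"
  unfolding l2H_def
proof -
  have "{i \<in> UNIV. qnorm2 (x i) \<noteq> 0} \<subseteq> {i. x i \<noteq> qzero}" by auto
  then have fin: "finite {i \<in> UNIV. qnorm2 (x i) \<noteq> 0}" using assms finite_subset by blast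
  then show "x \<in> {x. (\<lambda>i. qnorm2 (x i)) summable_on UNIV}"
    using finite_nonzero_values_imp_summable_on[OF fin] by simp
qed

lemma zs_l2H: "zs \<in> l2H"
  by (rule l2H_finite) (simp add: zs_def)

lemma l2norm_zs: "l2norm zs = 0"
  by (simp add: l2norm_def zs_def)

lemma Rq0: "Rq qzero T x = T (T x)"
  unfolding Rq_def
  by (rule ext, rule quat_eqI)
     (simp_all add: sadd_def ssub_def sscale_def qscale_def qadd_def qsub_def qneg_def
      qzero_def qnorm_def qnorm2_def idop_def)

lemma l2norm_nonneg: "0 \<le> l2norm x"
  by (simp add: l2norm_def infsum_nonneg qnorm2_nonneg)

lemma compact_zero: "compact_op (\<lambda>x. zs)"
proof -
  have b: "bounded_op (\<lambda>x. zs)"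
    unfolding bounded_op_def
    by (auto simp: zs_l2H[unfolded zs_def] sadd_def zs_def srmul_def l2norm_zs[unfolded zs_def] intro!: exI[of _ 0])
  show ?thesis
    unfolding compact_op_def
    apply (intro conjI b allI impI)
    apply (rule exI[of _ id], rule exI[of _ zs])
    apply (simp add: zs_l2H strict_mono_def)
    apply (simp add: ssub_def zs_def)
    using l2norm_zs unfolding zs_def by simp
qed

lemma inv_Phi0: "invertible_op T \<Longrightarrow> Phi0 T"
  unfolding Phi0_def
  apply (rule exI[of _ T], rule exI[of _ "\<lambda>x. zs"])
  apply (simp add: compact_zero)
  by (simp add: sadd_def zs_def)

definition e0 :: qseq where "e0 = (\<lambda>i. if i = 0 then Quat 1 0 0 0 else qzero)"

lemma e0_l2H: "e0 \<in> l2H"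
  by (rule l2H_finite) (simp add: e0_def)

lemma Rshift_e0: "Rshift e0 = zs"
  by (auto simp: Rshift_def e0_def zs_def)

lemma Rshift_zs: "Rshift zs = zs"
  by (auto simp: Rshift_def zs_def)

lemma not_inv0: "\<not> invertible_op (Rq qzero Rshift)"
proof
  assume "invertible_op (Rq qzero Rshift)"
  then obtain S where S: "\<forall>x\<in>l2H. S (Rq qzero Rshift x) = x"
    unfolding invertible_op_def by blast
  have "S zs = e0" using S[rule_format, OF e0_l2H] by (simp add: Rq0 Rshift_e0 Rshift_zs)
  moreover have "S zs = zs" using S[rule_format, OF zs_l2H] by (simp add: Rq0 Rshift_zs)
  ultimately have "e0 0 = zs 0" by simp
  then show False by (simp add: e0_def zs_def qzero_def)
qed

definition Sh :: "int \<Rightarrow> qop" where "Sh k x = (\<lambda>i. x (i + k))"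

lemma bij_plus: "bij_betw (\<lambda>i::int. i + k) UNIV UNIV"
  by (rule bij_betwI[of _ _ _ "\<lambda>i. i - k"]) auto

lemma Sh_l2H: "x \<in> l2H \<Longrightarrow> Sh k x \<in> l2H"
  unfolding l2H_def Sh_def
  using summable_on_reindex_bij_betw[OF bij_plus[of k], of "\<lambda>i. qnorm2 (x i)"] by simp

lemma Sh_norm: "l2norm (Sh k x) = l2norm x"
  unfolding l2norm_def Sh_def
  using infsum_reindex_bij_betw[OF bij_plus[of k], of "\<lambda>i. qnorm2 (x i)"] by simp

lemma Sh_bounded: "bounded_op (Sh k)"
  unfolding bounded_op_def
  by (auto simp: Sh_l2H Sh_norm intro!: exI[of _ 1]) (auto simp: Sh_def sadd_def srmul_def)

lemma Sh_inv: "invertible_op (Sh 2)"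
  unfolding invertible_op_def
  by (auto simp: Sh_bounded intro!: exI[of _ "Sh (-2)"]) (auto simp: Sh_def)

definition Kop :: qop where
  "Kop x = (\<lambda>i. if i = -1 \<or> i = -2 then qneg (x (i + 2)) else qzero)"

lemma Kop_l2H: "Kop x \<in> l2H"
proof (rule l2H_finite)
  have "{i. Kop x i \<noteq> qzero} \<subseteq> {-1,-2}" by (auto simp: Kop_def)
  then show "finite {i. Kop x i \<noteq> qzero}" using finite_subset by blast
qed

lemma Kop_norm: "l2norm (Kop x) = sqrt (qnorm2 (x 1) + qnorm2 (x 0))"
proof -
  have "(\<Sum>\<^sub>\<infinity>i. qnorm2 (Kop x i)) = (\<Sum>\<^sub>\<infinity>i\<in>{-1,-2}. qnorm2 (Kop x i))"
    by (rule infsum_cong_neutral) (auto simp: Kop_def)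
  also have "\<dots> = (\<Sum>i\<in>{-1,-2}. qnorm2 (Kop x i))" by (rule infsum_finite) simp
  also have "\<dots> = qnorm2 (x 1) + qnorm2 (x 0)" by (simp add: Kop_def)
  finally show ?thesis by (simp add: l2norm_def)
qed

lemma two_le:
  assumes "x \<in> l2H"
  shows "qnorm2 (x 1) + qnorm2 (x 0) \<le> (\<Sum>\<^sub>\<infinity>i. qnorm2 (x i))"
proof -
  have "qnorm2 (x 1) + qnorm2 (x 0) = (\<Sum>i\<in>{1,0}. qnorm2 (x i))" by simp
  also have "\<dots> = (\<Sum>\<^sub>\<infinity>i\<in>{1,0}. qnorm2 (x i))" by (rule infsum_finite[symmetric]) simp
  also have "\<dots> \<le> (\<Sum>\<^sub>\<infinity>i. qnorm2 (x i))"
    by (rule infsum_mono_neutral) (use assms in \<open>auto simp: l2H_def qnorm2_nonneg\<close>)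
  finally show ?thesis .
qed

lemma Kop_le: "x \<in> l2H \<Longrightarrow> l2norm (Kop x) \<le> l2norm x"
  unfolding Kop_norm by (simp add: l2norm_def two_le)

lemma qneg_add: "qneg (qadd a b) = qadd (qneg a) (qneg b)"
  by (rule quat_eqI) (simp_all add: qadd_def qneg_def)

lemma qneg_mul: "qneg (qmul a c) = qmul (qneg a) c"
  by (rule quat_eqI) (simp_all add: qmul_def qneg_def algebra_simps)

lemma qneg_sub: "qsub (qneg a) (qneg b) = qneg (qsub a b)"
  by (rule quat_eqI) (simp_all add: qsub_def qadd_def qneg_def)

lemma Kop_bounded: "bounded_op Kop"
  unfolding bounded_op_def
  by (auto simp: Kop_l2H Kop_le intro!: exI[of _ 1])
     (auto simp: Kop_def sadd_def srmul_def qneg_add qneg_mul)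

lemma Kop_sub: "ssub (Kop x) (Kop z) = Kop (ssub x z)"
  by (auto simp: Kop_def ssub_def qneg_sub)

lemma qadd_neg: "qadd a (qneg a) = qzero"
  by (rule quat_eqI) (simp_all add: qadd_def qneg_def qzero_def)

lemma Rq0_decomp: "Rq qzero Rshift x = sadd (Sh 2 x) (Kop x)"
  unfolding Rq0
proof (rule ext)
  fix i :: int
  show "Rshift (Rshift x) i = sadd (Sh 2 x) (Kop x) i"
    by (cases "i = -1"; cases "i = -2") (auto simp: Rshift_def Sh_def Kop_def sadd_def qadd_neg add.assoc)
qed

definition qv :: "quat \<Rightarrow> real \<times> real \<times> real \<times> real" where
  "qv p = (qre p, qi p, qj p, qk p)"

definition qvi :: "real \<times> real \<times> real \<times> real \<Rightarrow> quat" where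
  "qvi c = Quat (fst c) (fst (snd c)) (fst (snd (snd c))) (snd (snd (snd c)))"

lemma norm_qv: "(norm (qv p - c))\<^sup>2 = qnorm2 (qsub p (qvi c))"
proof -
  obtain a b d e where c: "c = (a, b, d, e)" by (cases c) auto
  show ?thesis
    by (simp add: c qv_def qvi_def norm_Pair qnorm2_def qsub_def qadd_def qneg_def
        power2_eq_square)
qed

lemma norm_qv2: "(norm (qv p))\<^sup>2 = qnorm2 p"
proof -
  have "qsub p (qvi 0) = p"
    by (rule quat_eqI) (simp_all add: qsub_def qadd_def qneg_def qvi_def)
  then show ?thesis using norm_qv[of p 0] by simp
qed

lemma Kop_compact: "compact_op Kop"
  unfolding compact_op_def
proof (intro conjI Kop_bounded allI impI)
  fix xs :: "nat \<Rightarrow> qseq"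
  assume as: "(\<forall>n. xs n \<in> l2H) \<and> (\<exists>B. \<forall>n. l2norm (xs n) \<le> B)"
  then obtain B where B: "\<And>n. l2norm (xs n) \<le> B" by blast
  define v where "v n = (qv (xs n 1), qv (xs n 0))" for n
  have nv: "norm (v n) = l2norm (Kop (xs n))" for n
    by (simp add: v_def norm_Pair Kop_norm norm_qv2)
  have "norm (v n) \<le> B" for n
    using nv Kop_le as B order_trans by metis
  then have "bounded (range v)" unfolding bounded_iff by blast
  then obtain l r where r: "strict_mono r" and lim: "(v \<circ> r) \<longlonglongrightarrow> l"
    using bounded_imp_convergent_subsequence by blast
  define z where "z = (\<lambda>i::int. if i = 1 then qvi (fst l) else if i = 0 then qvi (snd l) else qzero)"
  have z: "z \<in> l2H"
  proof (rule l2H_finite)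
    have "{i. z i \<noteq> qzero} \<subseteq> {0,1}" by (auto simp: z_def)
    then show "finite {i. z i \<noteq> qzero}" using finite_subset by blast
  qed
  have eq: "l2norm (ssub (Kop (xs (r n))) (Kop z)) = norm ((v \<circ> r) n - l)" for n
  proof -
    obtain a b where l: "l = (a, b)" by (cases l) auto
    show ?thesis
      unfolding Kop_sub Kop_norm by (simp add: v_def l norm_Pair norm_qv ssub_def z_def)
  qed
  have "(\<lambda>n. norm ((v \<circ> r) n - l)) \<longlonglongrightarrow> 0"
    using tendsto_norm_zero[OF LIM_zero[OF lim]] by (simp add: o_def)
  then have "(\<lambda>n. l2norm (ssub (Kop (xs (r n))) (Kop z))) \<longlonglongrightarrow> 0"
    unfolding eq .
  then show "\<exists>r y. strict_mono r \<and> y \<in> l2H \<and> (\<lambda>n. l2norm (ssub (Kop (xs (r n))) y)) \<longlonglongrightarrow> 0"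
    using r Kop_l2H by blast
qed

lemma Phi0_0: "Phi0 (Rq qzero Rshift)"
  unfolding Phi0_def
  using Sh_inv Kop_compact Rq0_decomp by blast

theorem mainTheorem14:
  shows "S_Phi0_spectrum Rshift \<subset> S_spectrum Rshift"
proof
  show "S_Phi0_spectrum Rshift \<subseteq> S_spectrum Rshift"
    unfolding S_Phi0_spectrum_def S_spectrum_def using inv_Phi0 by blast
  show "S_Phi0_spectrum Rshift \<noteq> S_spectrum Rshift"
  proof
    assume "S_Phi0_spectrum Rshift = S_spectrum Rshift"
    moreover have "qzero \<in> S_spectrum Rshift" using not_inv0 by (simp add: S_spectrum_def)
    moreover have "qzero \<notin> S_Phi0_spectrum Rshift" using Phi0_0 by (simp add: S_Phi0_spectrum_def)
    ultimately show False by simp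
  qed
qed

end
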